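(* Let $\Lambda$ be a finite set and let $Q=(q(x,y))_{x,y\in\Lambda\cup\{0\}}$ be the rate matrix of an irreducible continuous-time Markov jump process on $\Lambda\cup\{0\}$. For $N\ge2$ let $(\xi_t)_{t\ge0}$ be the Fleming–Viot process on $\Lambda^N$ with generator $$\mathcal{L}^N f(\xi)=\sum_{i=1}^N\sum_{x\in\Lambda\setminus\{\xi(i)\}}\Bigl[q(\xi(i),x)+q(\xi(i),0)\frac{\sum_{j\ne i}\mathbf 1_{\{\xi(j)=x\}}}{N-1}\Bigr]\bigl(f(\xi^{i,x})-f(\xi)\bigr),$$ ($\xi^{i,x}(i)=x$, $\xi^{i,x}(j)=\xi(j)$ for $j\ne i$), and let $\mathbb E^N_\xi$ denote expectation for the process started at $\xi$. Let $m(\xi)=\frac1N\sum_{i=1}^N\delta_{\xi(i)}$ be the empirical measure, and for a probability measure $\mu$ on $\Lambda$ let $$T_t\mu(x)=\frac{\sum_{y\in\Lambda}\mu(y)\exp(tQ)(y,x)}{1-\sum_{y\in\Lambda}\mu(y)\exp(tQ)(y,0)},\quad x\in\Lambda.$$ Then for any $T>0$, $$\lim_{N\to\infty}\max_{0\le t\le T}\max_{\xi\in\Lambda^N}\bigl\|\mathbb E^N_\xi[m(\xi_t)]-T_tm(\xi)\bigr\|_2=0,$$ where $\|\varphi\|_2=\bigl(\sum_{x\in\Lambda}\varphi(x)^2\bigr)^{1/2}$ and $\mathbb E^N_\xi[m(\xi_t)]$ denotes the vector $(\mathbb E^N_\xi[m(\xi_t)(x)])_{x\in\Lambda}$.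
   Context: In the Fleming–Viot process, $N$ particles move independently in $\Lambda$ with rates $Q$, except that when a particle attempts to jump to $0$ it instead jumps instantaneously to the position of one of the other particles chosen uniformly at random. $T_t\mu$ is the law at time $t$ of the $Q$-process started from $\mu$, conditioned on not having hit $0$ by time $t$. *)

theory Defs
  imports "HOL-Analysis.Analysis"
begin

text \<open>The state 0 is encoded as None, a state x of Lambda as Some x; Lambda is a finite type 'a.\<close>

definition semigroup :: "real \<Rightarrow> (('s \<Rightarrow> real) \<Rightarrow> ('s \<Rightarrow> real)) \<Rightarrow> ('s \<Rightarrow> real) \<Rightarrow> 's \<Rightarrow> real" where
  "semigroup t A f s = (\<Sum>k. t ^ k / fact k * (A ^^ k) f s)"

definition Qop :: "('a::finite option \<Rightarrow> 'a option \<Rightarrow> real) \<Rightarrow> ('a option \<Rightarrow> real) \<Rightarrow> 'a option \<Rightarrow> real" where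
  "Qop q g y = (\<Sum>z\<in>UNIV. q y z * g z)"

definition expQ :: "('a::finite option \<Rightarrow> 'a option \<Rightarrow> real) \<Rightarrow> real \<Rightarrow> 'a option \<Rightarrow> 'a option \<Rightarrow> real" where
  "expQ q t y z = semigroup t (Qop q) (\<lambda>w. if w = z then 1 else 0) y"

definition rate_matrix :: "('s::finite \<Rightarrow> 's \<Rightarrow> real) \<Rightarrow> bool" where
  "rate_matrix q \<longleftrightarrow> (\<forall>x y. x \<noteq> y \<longrightarrow> q x y \<ge> 0) \<and> (\<forall>x. (\<Sum>y\<in>UNIV. q x y) = 0)"

text \<open>Irreducibility of the process on Lambda (killed at the absorbing cemetery 0).\<close>
definition irreducible_on_Lambda :: "('a::finite option \<Rightarrow> 'a option \<Rightarrow> real) \<Rightarrow> bool" where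
  "irreducible_on_Lambda q \<longleftrightarrow>
     (\<forall>x y. (x, y) \<in> {(a, b). a \<noteq> b \<and> q (Some a) (Some b) > 0}\<^sup>*)"

definition configs :: "nat \<Rightarrow> (nat \<Rightarrow> 'a) set" where
  "configs N = PiE {..<N} (\<lambda>_. UNIV)"

definition FV_gen :: "('a::finite option \<Rightarrow> 'a option \<Rightarrow> real) \<Rightarrow> nat \<Rightarrow>
    ((nat \<Rightarrow> 'a) \<Rightarrow> real) \<Rightarrow> (nat \<Rightarrow> 'a) \<Rightarrow> real" where
  "FV_gen q N f \<xi> = (\<Sum>i<N. \<Sum>x\<in>UNIV - {\<xi> i}.
      (q (Some (\<xi> i)) (Some x) + q (Some (\<xi> i)) None *
         (real (card {j\<in>{..<N}. j \<noteq> i \<and> \<xi> j = x}) / (real N - 1)))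
      * (f (\<xi>(i := x)) - f \<xi>))"

definition emp :: "nat \<Rightarrow> (nat \<Rightarrow> 'a) \<Rightarrow> 'a \<Rightarrow> real" where
  "emp N \<xi> x = real (card {i\<in>{..<N}. \<xi> i = x}) / real N"

text \<open>E^N_xi[m(xi_t)(x)] = (exp(t L^N) (m(.)(x)))(xi).\<close>
definition FV_mean :: "('a::finite option \<Rightarrow> 'a option \<Rightarrow> real) \<Rightarrow> nat \<Rightarrow> real \<Rightarrow> (nat \<Rightarrow> 'a) \<Rightarrow> 'a \<Rightarrow> real" where
  "FV_mean q N t \<xi> x = semigroup t (FV_gen q N) (\<lambda>\<eta>. emp N \<eta> x) \<xi>"

definition Tt :: "('a::finite option \<Rightarrow> 'a option \<Rightarrow> real) \<Rightarrow> real \<Rightarrow> ('a \<Rightarrow> real) \<Rightarrow> 'a \<Rightarrow> real" where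
  "Tt q t \<mu> x = (\<Sum>y\<in>UNIV. \<mu> y * expQ q t (Some y) (Some x))
                / (1 - (\<Sum>y\<in>UNIV. \<mu> y * expQ q t (Some y) None))"

definition norm2 :: "('a::finite \<Rightarrow> real) \<Rightarrow> real" where
  "norm2 \<phi> = sqrt (\<Sum>x\<in>UNIV. (\<phi> x)\<^sup>2)"

end

theory Submission
  imports Defs
begin


definition dlt :: "'b \<Rightarrow> 'b \<Rightarrow> real" where "dlt e x = (if x = e then 1 else 0)"

lemma aux_fact: "of_nat (Suc n) * (y / fact (Suc n)) = (y / fact n :: real)"
proof -
  have "fact (Suc n) = of_nat (Suc n) * (fact n :: real)" by (simp del: of_nat_Suc)
  moreover have "of_nat (Suc n) \<noteq> (0::real)" "fact n \<noteq> (0::real)" by (simp_all del: of_nat_Suc)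
  ultimately show ?thesis by (simp del: of_nat_Suc fact_Suc)
qed

locale lingen =
  fixes S :: "'b set" and A :: "('b \<Rightarrow> real) \<Rightarrow> 'b \<Rightarrow> real"
  assumes fin: "finite S"
    and add: "\<And>f g. A (\<lambda>x. f x + g x) = (\<lambda>x. A f x + A g x)"
    and smult: "\<And>c f. A (\<lambda>x. c * f x) = (\<lambda>x. c * A f x)"
    and loc: "\<And>f g x. (\<And>y. y \<in> S \<Longrightarrow> f y = g y) \<Longrightarrow> x \<in> S \<Longrightarrow> A f x = A g x"
begin

lemma zero: "A (\<lambda>_. 0) = (\<lambda>_. 0)"
  using smult[of 0 "\<lambda>_. 0"] by simp

lemma sum: "finite I \<Longrightarrow> A (\<lambda>x. \<Sum>i\<in>I. f i x) = (\<lambda>x. \<Sum>i\<in>I. A (f i) x)"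
proof (induction I rule: finite_induct)
  case empty then show ?case using zero by simp
next
  case (insert a I)
  then show ?case using add[of "f a" "\<lambda>x. \<Sum>i\<in>I. f i x"] by simp
qed

lemma diff: "A (\<lambda>x. f x - g x) = (\<lambda>x. A f x - A g x)"
proof -
  have "A (\<lambda>x. f x - g x) = A (\<lambda>x. f x + (-1) * g x)" by simp
  also have "\<dots> = (\<lambda>x. A f x + A (\<lambda>x. (-1) * g x) x)" by (rule add)
  also have "\<dots> = (\<lambda>x. A f x - A g x)" unfolding smult by simp
  finally show ?thesis .
qed

lemma matrix: "x \<in> S \<Longrightarrow> A f x = (\<Sum>y\<in>S. f y * A (dlt y) x)"
proof -
  assume x: "x \<in> S"
  have "A f x = A (\<lambda>z. \<Sum>y\<in>S. f y * dlt y z) x"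
    by (rule loc[OF _ x]) (simp add: dlt_def fin if_distrib cong: if_cong)
  also have "\<dots> = (\<Sum>y\<in>S. f y * A (dlt y) x)"
    using sum[OF fin, of "\<lambda>y z. f y * dlt y z"] smult by simp
  finally show ?thesis .
qed

end

lemma lingen_pow: "lingen S A \<Longrightarrow> lingen S (A ^^ k)"
proof (induction k)
  case 0 then show ?case by (simp add: lingen_def)
next
  case (Suc k)
  interpret a: lingen S A by fact
  interpret b: lingen S "A ^^ k" using Suc by simp
  have e: "\<And>f. (A ^^ Suc k) f = A ((A ^^ k) f)" by simp
  show ?case
  proof
    show "finite S" by (rule a.fin)
    fix f g :: "_ \<Rightarrow> real" show "(A ^^ Suc k) (\<lambda>x. f x + g x) = (\<lambda>x. (A ^^ Suc k) f x + (A ^^ Suc k) g x)"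
      unfolding e b.add a.add ..
  next
    fix c and f :: "_ \<Rightarrow> real" show "(A ^^ Suc k) (\<lambda>x. c * f x) = (\<lambda>x. c * (A ^^ Suc k) f x)"
      unfolding e b.smult a.smult ..
  next
    fix f g :: "_ \<Rightarrow> real" and x assume fg: "\<And>y. y \<in> S \<Longrightarrow> f y = g y" and x: "x \<in> S"
    show "(A ^^ Suc k) f x = (A ^^ Suc k) g x"
      unfolding e by (rule a.loc[OF b.loc[OF fg] x])
  qed
qed

context lingen begin

definition nrm :: "('b \<Rightarrow> real) \<Rightarrow> real" where "nrm f = (\<Sum>y\<in>S. \<bar>f y\<bar>)"
definition M :: real where "M = (\<Sum>x\<in>S. \<Sum>y\<in>S. \<bar>A (dlt y) x\<bar>)"

lemma nrm_ge: "x \<in> S \<Longrightarrow> \<bar>f x\<bar> \<le> nrm f"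
  unfolding nrm_def by (rule member_le_sum) (auto simp: fin)

lemma M_nonneg: "M \<ge> 0" unfolding M_def by (auto intro!: sum_nonneg)

lemma nrm_A: "nrm (A f) \<le> M * nrm f"
proof -
  have "nrm (A f) = (\<Sum>x\<in>S. \<bar>\<Sum>y\<in>S. f y * A (dlt y) x\<bar>)"
    unfolding nrm_def by (intro sum.cong refl arg_cong[where f=abs] matrix)
  also have "\<dots> \<le> (\<Sum>x\<in>S. \<Sum>y\<in>S. nrm f * \<bar>A (dlt y) x\<bar>)"
  proof (rule sum_mono)
    fix x assume "x \<in> S"
    have "\<bar>\<Sum>y\<in>S. f y * A (dlt y) x\<bar> \<le> (\<Sum>y\<in>S. \<bar>f y * A (dlt y) x\<bar>)" by (rule sum_abs)
    also have "\<dots> \<le> (\<Sum>y\<in>S. nrm f * \<bar>A (dlt y) x\<bar>)"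
      by (rule sum_mono) (auto simp: abs_mult intro!: mult_right_mono nrm_ge)
    finally show "\<bar>\<Sum>y\<in>S. f y * A (dlt y) x\<bar> \<le> (\<Sum>y\<in>S. nrm f * \<bar>A (dlt y) x\<bar>)" .
  qed
  also have "\<dots> = M * nrm f" by (simp add: M_def sum_distrib_left sum_distrib_right mult.commute)
  finally show ?thesis .
qed

lemma nrm_nonneg: "nrm f \<ge> 0" unfolding nrm_def by (auto intro: sum_nonneg)

lemma nrm_pow: "nrm ((A ^^ k) f) \<le> M ^ k * nrm f"
proof (induction k)
  case 0 then show ?case by simp
next
  case (Suc k)
  have "nrm ((A ^^ Suc k) f) \<le> M * nrm ((A ^^ k) f)" using nrm_A[of "(A ^^ k) f"] by (simp only: funpow.simps comp_def)
  also have "\<dots> \<le> M * (M ^ k * nrm f)" using Suc M_nonneg by (rule mult_left_mono)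
  finally show ?case by simp
qed

lemma pow_bound: "x \<in> S \<Longrightarrow> \<bar>(A ^^ k) f x\<bar> \<le> M ^ k * nrm f"
  using nrm_ge[of x "(A ^^ k) f"] nrm_pow[of k f] by linarith

lemma summable_sg: "x \<in> S \<Longrightarrow> summable (\<lambda>k. norm (t ^ k / fact k * (A ^^ k) f x))"
proof -
  assume x: "x \<in> S"
  have "summable (\<lambda>k. inverse (fact k) * (\<bar>t\<bar> * M) ^ k)" by (rule summable_exp)
  then have s: "summable (\<lambda>k. nrm f * (inverse (fact k) * (\<bar>t\<bar> * M) ^ k))" by (rule summable_mult)
  show ?thesis
  proof (rule summable_comparison_test'[OF s])
    fix n :: nat
    have "norm (t ^ n / fact n * (A ^^ n) f x) = \<bar>t\<bar> ^ n / fact n * \<bar>(A ^^ n) f x\<bar>"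
      by (simp add: abs_mult flip: power_abs)
    also have "\<dots> \<le> \<bar>t\<bar> ^ n / fact n * (M ^ n * nrm f)"
      by (rule mult_left_mono[OF pow_bound[OF x]]) simp
    also have "\<dots> = nrm f * (inverse (fact n) * (\<bar>t\<bar> * M) ^ n)" by (simp add: power_mult_distrib divide_inverse)
    finally show "norm (norm (t ^ n / fact n * (A ^^ n) f x)) \<le> nrm f * (inverse (fact n) * (\<bar>t\<bar> * M) ^ n)" by simp
  qed
qed

lemma summable_sg': "x \<in> S \<Longrightarrow> summable (\<lambda>k. t ^ k / fact k * (A ^^ k) f x)"
  by (rule summable_norm_cancel[OF summable_sg])


lemma sg_matrix:
  assumes x: "x \<in> S"
  shows "semigroup t A f x = (\<Sum>y\<in>S. f y * semigroup t A (dlt y) x)"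
proof -
  have "semigroup t A f x = (\<Sum>k. \<Sum>y\<in>S. f y * (t^k/fact k * (A^^k) (dlt y) x))"
    unfolding semigroup_def
  proof (rule suminf_cong)
    fix k
    interpret p: lingen S "A^^k" by (rule lingen_pow) (rule lingen_axioms)
    have "(A^^k) f x = (\<Sum>y\<in>S. f y * (A^^k) (dlt y) x)" by (rule p.matrix[OF x])
    then show "t^k/fact k * (A^^k) f x = (\<Sum>y\<in>S. f y * (t^k/fact k * (A^^k) (dlt y) x))"
      by (simp add: sum_distrib_left mult.left_commute)
  qed
  also have "\<dots> = (\<Sum>y\<in>S. \<Sum>k. f y * (t^k/fact k * (A^^k) (dlt y) x))"
    by (rule suminf_sum) (intro summable_mult summable_sg' x)
  also have "\<dots> = (\<Sum>y\<in>S. f y * semigroup t A (dlt y) x)"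
    unfolding semigroup_def by (intro sum.cong refl suminf_mult summable_sg' x)
  finally show ?thesis .
qed

lemma sg_zero: "semigroup 0 A f x = f x"
proof -
  have "semigroup 0 A f x = (\<Sum>k. ((A^^k) f x / fact k) * 0 ^ k)"
    unfolding semigroup_def by (rule suminf_cong) (simp add: field_simps)
  also have "\<dots> = f x" by (subst powser_zero) simp
  finally show ?thesis .
qed

lemma sg_deriv:
  assumes x: "x \<in> S"
  shows "((\<lambda>t. semigroup t A f x) has_real_derivative semigroup t A (A f) x) (at t)"
proof -
  define c where "c k = (A^^k) f x / fact k" for k
  have e1: "(\<lambda>t. semigroup t A f x) = (\<lambda>t. \<Sum>n. c n * t^n)"
    unfolding semigroup_def c_def by (rule ext, rule suminf_cong) (simp add: field_simps)
  have e2: "semigroup t A (A f) x = (\<Sum>n. diffs c n * t^n)"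
    unfolding semigroup_def c_def diffs_def
  proof (rule suminf_cong)
    fix n
    have "(A ^^ n) (A f) = (A ^^ Suc n) f" by (simp only: funpow_Suc_right comp_def)
    then show "t ^ n / fact n * (A ^^ n) (A f) x = of_nat (Suc n) * ((A ^^ Suc n) f x / fact (Suc n)) * t ^ n"
      by (simp only: aux_fact) (simp add: field_simps del: funpow.simps)
  qed
  have s: "summable (\<lambda>n. c n * y ^ n)" for y
  proof -
    have "summable (\<lambda>k. y ^ k / fact k * (A ^^ k) f x)" by (rule summable_sg'[OF x])
    then show ?thesis unfolding c_def by (rule summable_cong[THEN iffD1, rotated]) (simp add: field_simps)
  qed
  show ?thesis unfolding e1 e2 by (rule termdiffs_strong_converges_everywhere[OF s])
qed

lemma sg_comm:
  assumes x: "x \<in> S"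
  shows "A (semigroup t A f) x = semigroup t A (A f) x"
proof -
  have "A (semigroup t A f) x = (\<Sum>y\<in>S. semigroup t A f y * A (dlt y) x)" by (rule matrix[OF x])
  also have "\<dots> = (\<Sum>y\<in>S. \<Sum>k. t^k/fact k * ((A^^k) f y * A (dlt y) x))"
    unfolding semigroup_def
  proof (rule sum.cong[OF refl])
    fix y assume y: "y \<in> S"
    show "(\<Sum>k. t^k/fact k * (A^^k) f y) * A (dlt y) x = (\<Sum>k. t^k/fact k * ((A^^k) f y * A (dlt y) x))"
      using suminf_mult2[OF summable_sg'[OF y, of t f], of "A (dlt y) x"] by (simp add: mult.assoc)
  qed
  also have "\<dots> = (\<Sum>k. \<Sum>y\<in>S. t^k/fact k * ((A^^k) f y * A (dlt y) x))"
  proof (rule suminf_sum[symmetric])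
    fix y assume y: "y \<in> S"
    show "summable (\<lambda>k. t^k/fact k * ((A^^k) f y * A (dlt y) x))"
      using summable_mult2[OF summable_sg'[OF y, of t f], of "A (dlt y) x"] by (simp add: mult.assoc)
  qed
  also have "\<dots> = semigroup t A (A f) x"
    unfolding semigroup_def
  proof (rule suminf_cong)
    fix k
    have "(\<Sum>y\<in>S. t^k/fact k * ((A^^k) f y * A (dlt y) x)) = t^k/fact k * (\<Sum>y\<in>S. (A^^k) f y * A (dlt y) x)"
      by (simp add: sum_distrib_left)
    also have "(\<Sum>y\<in>S. (A^^k) f y * A (dlt y) x) = A ((A^^k) f) x" by (rule matrix[OF x, symmetric])
    also have "A ((A^^k) f) = (A ^^ Suc k) f" by simp
    also have "\<dots> = (A ^^ k) (A f)" by (simp only: funpow_Suc_right comp_def)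
    finally show "(\<Sum>y\<in>S. t^k/fact k * ((A^^k) f y * A (dlt y) x)) = t^k/fact k * (A ^^ k) (A f) x" .
  qed
  finally show ?thesis .
qed

lemma sg_const:
  assumes A1: "\<And>y. y \<in> S \<Longrightarrow> A (\<lambda>_. 1) y = 0" and x: "x \<in> S"
  shows "semigroup t A (\<lambda>_. 1) x = 1"
proof -
  have z: "y \<in> S \<Longrightarrow> (A^^Suc k) (\<lambda>_. 1) y = 0" for k y
  proof (induction k arbitrary: y)
    case 0 then show ?case using A1 by simp
  next
    case (Suc k)
    have "(A^^Suc (Suc k)) (\<lambda>_. 1) y = A ((A^^Suc k) (\<lambda>_. 1)) y" by (simp only: funpow.simps comp_def)
    also have "\<dots> = A (\<lambda>_. 0) y" by (rule loc[OF Suc.IH Suc.prems])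
    also have "\<dots> = 0" by (simp add: zero)
    finally show ?case .
  qed
  have "semigroup t A (\<lambda>_. 1) x = (\<Sum>k. if k = 0 then 1 else 0)"
    unfolding semigroup_def
  proof (rule suminf_cong)
    fix k show "t ^ k / fact k * (A ^^ k) (\<lambda>_. 1) x = (if k = 0 then 1 else 0)"
      using z[OF x, of "k - 1"] by (cases k) auto
  qed
  also have "\<dots> = 1" using sums_single[of 0 "\<lambda>_. 1::real"] by (simp add: sums_iff)
  finally show ?thesis .
qed


end

lemma binom_step:
  fixes T :: "nat \<Rightarrow> real" and c :: real
  shows "(\<Sum>j\<le>k. of_nat (k choose j) * c^(k-j) * (T (Suc j) + c * T j))
       = (\<Sum>j\<le>Suc k. of_nat (Suc k choose j) * c^(Suc k - j) * T j)"
proof -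
  have r1: "(\<Sum>j\<le>Suc k. of_nat (Suc k choose j) * c^(Suc k - j) * T j)
     = c^(Suc k) * T 0 + (\<Sum>i\<le>k. of_nat (k choose i) * c^(k-i) * T (Suc i))
         + (\<Sum>i\<le>k. of_nat (k choose Suc i) * c^(k-i) * T (Suc i))"
    by (simp add: sum.atMost_Suc_shift sum.distrib algebra_simps del: sum.atMost_Suc)
  have r2: "(\<Sum>j\<le>k. of_nat (k choose j) * c^(Suc k - j) * T j)
     = c^(Suc k) * T 0 + (\<Sum>i\<le>k. of_nat (k choose Suc i) * c^(k-i) * T (Suc i))"
  proof -
    have "(\<Sum>j\<le>k. of_nat (k choose j) * c^(Suc k - j) * T j)
        = (\<Sum>j\<le>Suc k. of_nat (k choose j) * c^(Suc k - j) * T j)"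
      by (simp del: sum.atMost_Suc_shift)
    also have "\<dots> = c^(Suc k) * T 0 + (\<Sum>i\<le>k. of_nat (k choose Suc i) * c^(k-i) * T (Suc i))"
      by (simp add: sum.atMost_Suc_shift del: sum.atMost_Suc)
    finally show ?thesis .
  qed
  have "(\<Sum>j\<le>k. of_nat (k choose j) * c^(k-j) * (T (Suc j) + c * T j))
      = (\<Sum>j\<le>k. of_nat (k choose j) * c^(k-j) * T (Suc j)) + (\<Sum>j\<le>k. of_nat (k choose j) * c^(Suc k - j) * T j)"
  proof -
    have "(\<Sum>j\<le>k. of_nat (k choose j) * c^(k-j) * (T (Suc j) + c * T j))
       = (\<Sum>j\<le>k. of_nat (k choose j) * c^(k-j) * T (Suc j) + of_nat (k choose j) * c^(Suc k - j) * T j)"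
    proof (rule sum.cong[OF refl])
      fix j assume "j \<in> {..k}"
      then have "c^(Suc k - j) = c^(k-j) * c" by (metis Suc_diff_le atMost_iff power_Suc2)
      then show "of_nat (k choose j) * c^(k-j) * (T (Suc j) + c * T j)
          = of_nat (k choose j) * c^(k-j) * T (Suc j) + of_nat (k choose j) * c^(Suc k - j) * T j"
        by (simp add: algebra_simps)
    qed
    then show ?thesis by (simp only: sum.distrib)
  qed
  then show ?thesis using r1 r2 by simp
qed

lemma sum_rev_atMost: "(\<Sum>i\<le>k. g i) = (\<Sum>i\<le>k. g (k - i))" for g :: "nat \<Rightarrow> real"
  by (rule sum.reindex_bij_witness[where i="\<lambda>i. k - i" and j="\<lambda>i. k - i"]) auto

context lingen begin

definition Cd :: real where "Cd = (\<Sum>z\<in>S. \<bar>A (dlt z) z\<bar>)"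

definition Bop :: "('b \<Rightarrow> real) \<Rightarrow> 'b \<Rightarrow> real" where "Bop h = (\<lambda>z. A h z + Cd * h z)"

lemma Cd_nonneg: "Cd \<ge> 0" unfolding Cd_def by (auto intro: sum_nonneg)

lemma lingen_B: "lingen S Bop"
proof
  show "finite S" by (rule fin)
  fix f g :: "'b \<Rightarrow> real"
  show "Bop (\<lambda>x. f x + g x) = (\<lambda>x. Bop f x + Bop g x)" unfolding Bop_def add by (simp add: algebra_simps)
next
  fix c and f :: "'b \<Rightarrow> real"
  show "Bop (\<lambda>x. c * f x) = (\<lambda>x. c * Bop f x)" unfolding Bop_def smult by (simp add: algebra_simps)
next
  fix f g :: "'b \<Rightarrow> real" and x
  assume fg: "\<And>y. y \<in> S \<Longrightarrow> f y = g y" and x: "x \<in> S"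
  show "Bop f x = Bop g x" unfolding Bop_def using loc[OF fg x] fg[OF x] by simp
qed

lemma A_pow_binom:
  "(A^^k) f = (\<lambda>z. \<Sum>j\<le>k. of_nat (k choose j) * (-Cd)^(k-j) * (Bop^^j) f z)"
proof (induction k)
  case 0 then show ?case by simp
next
  case (Suc k)
  have AB: "A ((Bop^^j) f) z = (Bop^^Suc j) f z - Cd * (Bop^^j) f z" for j z
    by (simp add: Bop_def)
  have "(A^^Suc k) f = A ((A^^k) f)" by simp
  also have "\<dots> = A (\<lambda>z. \<Sum>j\<le>k. of_nat (k choose j) * (-Cd)^(k-j) * (Bop^^j) f z)" by (simp only: Suc.IH)
  also have "\<dots> = (\<lambda>z. \<Sum>j\<le>k. of_nat (k choose j) * (-Cd)^(k-j) * A ((Bop^^j) f) z)"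
    by (simp only: sum[OF finite_atMost] smult)
  also have "\<dots> = (\<lambda>z. \<Sum>j\<le>k. of_nat (k choose j) * (-Cd)^(k-j) * ((Bop^^Suc j) f z + (-Cd) * (Bop^^j) f z))"
    by (simp only: AB) simp
  also have "\<dots> = (\<lambda>z. \<Sum>j\<le>Suc k. of_nat (Suc k choose j) * (-Cd)^(Suc k-j) * (Bop^^j) f z)"
    by (rule ext) (rule binom_step[of k "-Cd" "\<lambda>j. (Bop^^j) f _"])
  finally show ?case .
qed

lemma B_nonneg:
  assumes offd: "\<And>x y. x \<in> S \<Longrightarrow> y \<in> S \<Longrightarrow> y \<noteq> x \<Longrightarrow> A (dlt y) x \<ge> 0"
    and h: "\<And>y. y \<in> S \<Longrightarrow> h y \<ge> 0" and x: "x \<in> S"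
  shows "Bop h x \<ge> 0"
proof -
  have "A h x = (\<Sum>y\<in>S. h y * A (dlt y) x)" by (rule matrix[OF x])
  also have "\<dots> = h x * A (dlt x) x + (\<Sum>y\<in>S - {x}. h y * A (dlt y) x)"
    using x fin by (simp add: sum.remove)
  finally have e: "A h x = h x * A (dlt x) x + (\<Sum>y\<in>S - {x}. h y * A (dlt y) x)" .
  have "(\<Sum>y\<in>S - {x}. h y * A (dlt y) x) \<ge> 0"
    by (rule sum_nonneg) (auto intro!: mult_nonneg_nonneg h offd x)
  moreover have "\<bar>A (dlt x) x\<bar> \<le> Cd" unfolding Cd_def
    by (rule member_le_sum[of x S "\<lambda>z. \<bar>A (dlt z) z\<bar>"]) (auto simp: x fin)
  then have "A (dlt x) x + Cd \<ge> 0" by linarith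
  then have "h x * (A (dlt x) x + Cd) \<ge> 0" using h[OF x] by simp
  ultimately show ?thesis unfolding Bop_def e by (simp add: algebra_simps)
qed

lemma Bpow_nonneg:
  assumes offd: "\<And>x y. x \<in> S \<Longrightarrow> y \<in> S \<Longrightarrow> y \<noteq> x \<Longrightarrow> A (dlt y) x \<ge> 0"
    and h: "\<And>y. y \<in> S \<Longrightarrow> h y \<ge> 0" and x: "x \<in> S"
  shows "(Bop^^j) h x \<ge> 0"
  using x
proof (induction j arbitrary: x)
  case 0 then show ?case using h by simp
next
  case (Suc j)
  have "Bop ((Bop^^j) h) x \<ge> 0" by (rule B_nonneg[OF offd Suc.IH Suc.prems])
  then show ?case by simp
qed

lemma sg_pos:
  assumes offd: "\<And>x y. x \<in> S \<Longrightarrow> y \<in> S \<Longrightarrow> y \<noteq> x \<Longrightarrow> A (dlt y) x \<ge> 0"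
    and x: "x \<in> S" and t: "t \<ge> 0" and f: "\<And>y. y \<in> S \<Longrightarrow> f y \<ge> 0"
  shows "semigroup t A f x \<ge> exp (- (Cd * t)) * f x"
proof -
  interpret b: lingen S Bop by (rule lingen_B)
  define a where "a i = (- (Cd * t))^i / fact i" for i
  define b where "b j = t^j / fact j * (Bop^^j) f x" for j
  have sa: "summable (\<lambda>k. norm (a k))"
  proof -
    have "summable (\<lambda>k. inverse (fact k) * (\<bar>Cd * t\<bar>) ^ k)" by (rule summable_exp)
    then show ?thesis unfolding a_def
      by (rule summable_cong[THEN iffD1, rotated]) (simp add: power_abs divide_inverse abs_mult mult.commute)
  qed
  have sb: "summable (\<lambda>k. norm (b k))" unfolding b_def by (rule b.summable_sg[OF x])
  have ea: "(\<Sum>k. a k) = exp (- (Cd * t))"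
    using exp_converges[of "- (Cd * t)"] unfolding a_def by (simp add: sums_iff divide_inverse mult.commute)
  have "semigroup t A f x = (\<Sum>k. \<Sum>i\<le>k. a i * b (k - i))"
    unfolding semigroup_def
  proof (rule suminf_cong)
    fix k
    have "t ^ k / fact k * (A ^^ k) f x = (\<Sum>j\<le>k. t ^ k / fact k * (of_nat (k choose j) * (-Cd)^(k-j) * (Bop^^j) f x))"
      by (simp add: A_pow_binom sum_distrib_left)
    also have "\<dots> = (\<Sum>j\<le>k. a (k - j) * b j)"
    proof (rule sum.cong[OF refl])
      fix j assume "j \<in> {..k}"
      then have jk: "j \<le> k" by simp
      have "t ^ k = t^j * t^(k-j)" using jk by (simp add: power_add[symmetric])
      moreover have "(- (Cd * t))^(k-j) = (-Cd)^(k-j) * t^(k-j)"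
        by (simp add: power_mult_distrib[symmetric])
      ultimately show "t ^ k / fact k * (of_nat (k choose j) * (-Cd)^(k-j) * (Bop^^j) f x) = a (k - j) * b j"
        unfolding a_def b_def binomial_fact[OF jk] using jk
        by (simp add: field_simps)
    qed
    also have "\<dots> = (\<Sum>i\<le>k. a i * b (k - i))"
      by (subst sum_rev_atMost) (simp add: mult.commute)
    finally show "t ^ k / fact k * (A ^^ k) f x = (\<Sum>i\<le>k. a i * b (k - i))" .
  qed
  also have "\<dots> = (\<Sum>k. a k) * (\<Sum>k. b k)" by (rule Cauchy_product[OF sa sb, symmetric])
  also have "\<dots> = exp (- (Cd * t)) * (\<Sum>k. b k)" by (simp only: ea)
  finally have e: "semigroup t A f x = exp (- (Cd * t)) * (\<Sum>k. b k)" .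
  have bnn: "b k \<ge> 0" for k unfolding b_def
    by (intro mult_nonneg_nonneg divide_nonneg_pos zero_le_power t Bpow_nonneg[OF offd f x]) auto
  have "sum b {0} \<le> (\<Sum>k. b k)"
    by (rule sum_le_suminf[OF summable_norm_cancel[OF sb]]) (auto intro: bnn)
  then have "f x \<le> (\<Sum>k. b k)" by (simp add: b_def)
  then show ?thesis unfolding e by (intro mult_left_mono) auto
qed


lemma p_nonneg:
  assumes offd: "\<And>x y. x \<in> S \<Longrightarrow> y \<in> S \<Longrightarrow> y \<noteq> x \<Longrightarrow> A (dlt y) x \<ge> 0"
    and x: "x \<in> S" and t: "t \<ge> 0" and y: "y \<in> S"
  shows "semigroup t A (dlt y) x \<ge> 0"
proof -
  have "semigroup t A (dlt y) x \<ge> exp (- (Cd * t)) * dlt y x"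
    by (rule sg_pos[OF offd x t]) (auto simp: dlt_def)
  moreover have "exp (- (Cd * t)) * dlt y x \<ge> 0" by (simp add: dlt_def)
  ultimately show ?thesis by linarith
qed

lemma p_sum:
  assumes A1: "\<And>y. y \<in> S \<Longrightarrow> A (\<lambda>_. 1) y = 0" and x: "x \<in> S"
  shows "(\<Sum>y\<in>S. semigroup t A (dlt y) x) = 1"
  using sg_matrix[OF x, of t "\<lambda>_. 1"] sg_const[OF A1 x, of t] by simp

lemma duhamel:
  fixes G G' :: "real \<Rightarrow> 'b \<Rightarrow> real"
  assumes offd: "\<And>x y. x \<in> S \<Longrightarrow> y \<in> S \<Longrightarrow> y \<noteq> x \<Longrightarrow> A (dlt y) x \<ge> 0"
    and A1: "\<And>y. y \<in> S \<Longrightarrow> A (\<lambda>_. 1) y = 0"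
    and x: "x \<in> S" and t: "t \<ge> 0"
    and dG: "\<And>r \<eta>. r \<in> {0..t} \<Longrightarrow> \<eta> \<in> S \<Longrightarrow> ((\<lambda>r. G r \<eta>) has_real_derivative G' r \<eta>) (at r)"
    and bd: "\<And>r \<eta>. r \<in> {0..t} \<Longrightarrow> \<eta> \<in> S \<Longrightarrow> \<bar>A (G r) \<eta> - G' r \<eta>\<bar> \<le> K"
  shows "\<bar>semigroup t A (G 0) x - G t x\<bar> \<le> t * K"
proof -
  define p where "p s \<eta> = semigroup s A (dlt \<eta>) x" for s \<eta>
  define u where "u s = (\<Sum>\<eta>\<in>S. p s \<eta> * G (t - s) \<eta>)" for s
  define u' where "u' s = (\<Sum>\<zeta>\<in>S. p s \<zeta> * (A (G (t - s)) \<zeta> - G' (t - s) \<zeta>))" for s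
  have ut: "u t = semigroup t A (G 0) x"
    unfolding u_def p_def using sg_matrix[OF x, of t "G 0"] by (simp add: mult.commute)
  have u0: "u 0 = G t x"
  proof -
    have "u 0 = (\<Sum>\<eta>\<in>S. dlt \<eta> x * G t \<eta>)" unfolding u_def p_def by (simp add: sg_zero)
    also have "\<dots> = (\<Sum>\<eta>\<in>S. if \<eta> = x then G t \<eta> else 0)" by (intro sum.cong refl) (auto simp: dlt_def)
    also have "\<dots> = G t x" using x fin by (simp add: sum.delta)
    finally show ?thesis .
  qed
  have du: "(u has_real_derivative u' s) (at s)" if s: "0 \<le> s" "s \<le> t" for s
  proof -
    have r: "t - s \<in> {0..t}" using s by auto
    have d1: "((\<lambda>s. p s \<eta> * G (t - s) \<eta>) has_real_derivative
        semigroup s A (A (dlt \<eta>)) x * G (t - s) \<eta> + (G' (t - s) \<eta> * (-1)) * p s \<eta>) (at s)"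
      if \<eta>: "\<eta> \<in> S" for \<eta>
    proof (rule DERIV_mult)
      show "((\<lambda>s. p s \<eta>) has_real_derivative semigroup s A (A (dlt \<eta>)) x) (at s)"
        unfolding p_def by (rule sg_deriv[OF x])
      have "((\<lambda>s. t - s) has_real_derivative -1) (at s)"
        using DERIV_diff[OF DERIV_const[of t] DERIV_ident] by simp
      then show "((\<lambda>s. G (t - s) \<eta>) has_real_derivative G' (t - s) \<eta> * (-1)) (at s)"
        by (rule DERIV_chain2[where f="\<lambda>r. G r \<eta>" and g="\<lambda>s. t - s", OF dG[OF r \<eta>]])
    qed
    have "(u has_real_derivative (\<Sum>\<eta>\<in>S. semigroup s A (A (dlt \<eta>)) x * G (t - s) \<eta> + (G' (t - s) \<eta> * (-1)) * p s \<eta>)) (at s)"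
      unfolding u_def by (rule DERIV_sum) (rule d1)
    moreover have "(\<Sum>\<eta>\<in>S. semigroup s A (A (dlt \<eta>)) x * G (t - s) \<eta> + (G' (t - s) \<eta> * (-1)) * p s \<eta>) = u' s"
    proof -
      have "(\<Sum>\<eta>\<in>S. semigroup s A (A (dlt \<eta>)) x * G (t - s) \<eta>)
          = (\<Sum>\<eta>\<in>S. \<Sum>\<zeta>\<in>S. A (dlt \<eta>) \<zeta> * p s \<zeta> * G (t - s) \<eta>)"
        unfolding p_def by (intro sum.cong refl) (simp add: sg_matrix[OF x, of s "A (dlt _)"] sum_distrib_right)
      also have "\<dots> = (\<Sum>\<zeta>\<in>S. \<Sum>\<eta>\<in>S. A (dlt \<eta>) \<zeta> * p s \<zeta> * G (t - s) \<eta>)"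
        by (rule sum.swap)
      also have "\<dots> = (\<Sum>\<zeta>\<in>S. p s \<zeta> * A (G (t - s)) \<zeta>)"
      proof (rule sum.cong[OF refl])
        fix \<zeta> assume z: "\<zeta> \<in> S"
        have "A (G (t - s)) \<zeta> = (\<Sum>\<eta>\<in>S. G (t - s) \<eta> * A (dlt \<eta>) \<zeta>)" by (rule matrix[OF z])
        then show "(\<Sum>\<eta>\<in>S. A (dlt \<eta>) \<zeta> * p s \<zeta> * G (t - s) \<eta>) = p s \<zeta> * A (G (t - s)) \<zeta>"
          by (simp add: sum_distrib_left algebra_simps)
      qed
      finally show ?thesis unfolding u'_def by (simp add: sum.distrib algebra_simps sum_subtractf)
    qed
    ultimately show ?thesis by simp
  qed
  have bu: "\<bar>u' s\<bar> \<le> K" if s: "0 \<le> s" "s \<le> t" for s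
  proof -
    have r: "t - s \<in> {0..t}" using s by auto
    have "\<bar>u' s\<bar> \<le> (\<Sum>\<zeta>\<in>S. \<bar>p s \<zeta> * (A (G (t - s)) \<zeta> - G' (t - s) \<zeta>)\<bar>)"
      unfolding u'_def by (rule sum_abs)
    also have "\<dots> \<le> (\<Sum>\<zeta>\<in>S. p s \<zeta> * K)"
    proof (rule sum_mono)
      fix \<zeta> assume z: "\<zeta> \<in> S"
      have pn: "p s \<zeta> \<ge> 0" unfolding p_def by (rule p_nonneg[OF offd x s(1) z])
      show "\<bar>p s \<zeta> * (A (G (t - s)) \<zeta> - G' (t - s) \<zeta>)\<bar> \<le> p s \<zeta> * K"
        using pn bd[OF r z] by (simp add: abs_mult mult_left_mono)
    qed
    also have "\<dots> = K" using p_sum[OF A1 x, of s] unfolding p_def by (simp add: sum_distrib_right[symmetric])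
    finally show ?thesis .
  qed
  show ?thesis
  proof (cases "t = 0")
    case True then show ?thesis using ut u0 by simp
  next
    case False
    then have "0 < t" using t by simp
    from MVT2[OF this, of u u'] du obtain z where z: "0 < z" "z < t" "u t - u 0 = (t - 0) * u' z" by blast
    have "\<bar>u t - u 0\<bar> = t * \<bar>u' z\<bar>" using z t by (simp add: abs_mult)
    also have "\<dots> \<le> t * K" using bu[of z] z t by (intro mult_left_mono) auto
    finally show ?thesis using ut u0 by simp
  qed
qed

end


lemma sum_option: "(\<Sum>w\<in>(UNIV::'a::finite option set). h w) = h None + (\<Sum>z\<in>UNIV. h (Some z))"
proof -
  have "(UNIV::'a option set) = insert None (Some ` UNIV)" by (rule UNIV_option_conv)
  then have "(\<Sum>w\<in>(UNIV::'a option set). h w) = (\<Sum>w\<in>insert None (Some ` UNIV). h w)" by simp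
  also have "\<dots> = h None + (\<Sum>w\<in>Some ` UNIV. h w)" by (rule sum.insert) auto
  also have "(\<Sum>w\<in>Some ` (UNIV::'a set). h w) = (\<Sum>z\<in>UNIV. h (Some z))" by (rule sum.reindex_cong[where l=Some]) auto
  finally show ?thesis .
qed

lemma Qop_dlt: "Qop q (dlt y) x = q x y"
proof -
  have "Qop q (dlt y) x = (\<Sum>z\<in>UNIV. if z = y then q x z else 0)"
    unfolding Qop_def by (intro sum.cong refl) (simp add: dlt_def)
  also have "\<dots> = q x y" by simp
  finally show ?thesis .
qed

lemma expQ_sg: "expQ q r y z = semigroup r (Qop q) (dlt z) y"
  unfolding expQ_def dlt_def[abs_def] ..

locale qctx =
  fixes q :: "'a::finite option \<Rightarrow> 'a option \<Rightarrow> real"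
  assumes rm: "rate_matrix q" and q0: "\<forall>y. q None y = 0"
begin

sublocale Q: lingen UNIV "Qop q"
proof
  show "finite (UNIV :: 'a option set)" by simp
  fix f g :: "'a option \<Rightarrow> real"
  show "Qop q (\<lambda>x. f x + g x) = (\<lambda>x. Qop q f x + Qop q g x)"
    unfolding Qop_def by (rule ext) (simp add: sum.distrib algebra_simps)
next
  fix c and f :: "'a option \<Rightarrow> real"
  show "Qop q (\<lambda>x. c * f x) = (\<lambda>x. c * Qop q f x)"
    unfolding Qop_def by (rule ext) (simp add: sum_distrib_left algebra_simps)
next
  fix f g :: "'a option \<Rightarrow> real" and x
  assume "\<And>y. y \<in> UNIV \<Longrightarrow> f y = g y"
  then have "f = g" by auto
  then show "Qop q f x = Qop q g x" by simp
qed

lemma offd: "x \<in> UNIV \<Longrightarrow> y \<in> UNIV \<Longrightarrow> y \<noteq> x \<Longrightarrow> Qop q (dlt y) x \<ge> 0"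
  using rm unfolding rate_matrix_def Qop_dlt by auto

lemma Q1: "y \<in> UNIV \<Longrightarrow> Qop q (\<lambda>_. 1) y = 0"
  using rm unfolding rate_matrix_def Qop_def by simp

lemma P_deriv: "((\<lambda>r. expQ q r y z) has_real_derivative (\<Sum>w\<in>UNIV. q y w * expQ q r w z)) (at r)"
proof -
  have "((\<lambda>r. semigroup r (Qop q) (dlt z) y) has_real_derivative semigroup r (Qop q) (Qop q (dlt z)) y) (at r)"
    by (rule Q.sg_deriv) simp
  moreover have "semigroup r (Qop q) (Qop q (dlt z)) y = (\<Sum>w\<in>UNIV. q y w * expQ q r w z)"
    using Q.sg_comm[of y r "dlt z"] unfolding expQ_sg by (simp add: Qop_def)
  ultimately show ?thesis unfolding expQ_sg by simp
qed

lemma P_None: "expQ q r None z = dlt z None"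
proof -
  have "\<forall>r. ((\<lambda>r. expQ q r None z) has_real_derivative 0) (at r)"
    using P_deriv[of None z] q0 by simp
  then have "expQ q r None z = expQ q 0 None z" by (rule DERIV_isconst_all)
  also have "\<dots> = dlt z None" unfolding expQ_sg by (rule Q.sg_zero)
  finally show ?thesis .
qed

lemma P_rowsum: "(\<Sum>z\<in>UNIV. expQ q r y z) = 1"
  unfolding expQ_sg by (rule Q.p_sum[OF Q1]) auto

lemma P_nonneg: "r \<ge> 0 \<Longrightarrow> expQ q r y z \<ge> 0"
  unfolding expQ_sg by (rule Q.p_nonneg[OF offd]) auto

lemma P_diag: "r \<ge> 0 \<Longrightarrow> expQ q r y y \<ge> exp (- (Q.Cd * r))"
proof -
  assume r: "r \<ge> 0"
  have "semigroup r (Qop q) (dlt y) y \<ge> exp (- (Q.Cd * r)) * dlt y y"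
    by (rule Q.sg_pos[OF offd _ r]) (auto simp: dlt_def)
  then show ?thesis unfolding expQ_sg by (simp add: dlt_def)
qed

definition QL :: "('a \<Rightarrow> real) \<Rightarrow> 'a \<Rightarrow> real" where
  "QL \<phi> y = (\<Sum>z\<in>UNIV. q (Some y) (Some z) * \<phi> z)"
definition kap :: "'a \<Rightarrow> real" where "kap y = q (Some y) None"
definition al :: "'a \<Rightarrow> real \<Rightarrow> 'a \<Rightarrow> real" where "al x r y = expQ q r (Some y) (Some x)"
definition be :: "real \<Rightarrow> 'a \<Rightarrow> real" where "be r y = 1 - expQ q r (Some y) None"

lemma rowsum: "(\<Sum>z\<in>UNIV. q (Some y) (Some z)) = - kap y"
proof -
  have "q (Some y) None + (\<Sum>z\<in>UNIV. q (Some y) (Some z)) = 0"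
    using rm unfolding rate_matrix_def by (simp add: sum_option)
  then show ?thesis unfolding kap_def by linarith
qed

lemma kap_nonneg: "kap y \<ge> 0"
  using rm unfolding rate_matrix_def kap_def by auto

lemma be_sum: "be r y = (\<Sum>z\<in>UNIV. al z r y)"
  using P_rowsum[of r "Some y"] unfolding be_def al_def by (simp add: sum_option)

lemma al_deriv: "((\<lambda>r. al x r y) has_real_derivative QL (al x r) y) (at r)"
proof -
  have "(\<Sum>w\<in>UNIV. q (Some y) w * expQ q r w (Some x)) = QL (al x r) y"
    by (simp add: sum_option P_None QL_def al_def dlt_def)
  then show ?thesis unfolding al_def using P_deriv[of "Some y" "Some x" r] by simp
qed

lemma be_deriv: "((\<lambda>r. be r y) has_real_derivative QL (be r) y) (at r)"
proof -
  have "(\<Sum>w\<in>UNIV. q (Some y) w * expQ q r w None)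
      = kap y + (\<Sum>z\<in>UNIV. q (Some y) (Some z) * (1 - be r z))"
    by (simp add: sum_option P_None kap_def be_def dlt_def)
  also have "\<dots> = kap y + (\<Sum>z\<in>UNIV. q (Some y) (Some z)) - QL (be r) y"
    by (simp add: QL_def algebra_simps sum_subtractf)
  also have "\<dots> = - QL (be r) y" by (simp add: rowsum)
  finally have e: "(\<Sum>w\<in>UNIV. q (Some y) w * expQ q r w None) = - QL (be r) y" .
  have "((\<lambda>r. 1 - expQ q r (Some y) None) has_real_derivative 0 - (\<Sum>w\<in>UNIV. q (Some y) w * expQ q r w None)) (at r)"
    by (rule DERIV_diff[OF DERIV_const P_deriv])
  then show ?thesis unfolding be_def e by simp
qed

lemma al_nonneg: "r \<ge> 0 \<Longrightarrow> al x r y \<ge> 0"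
  unfolding al_def by (rule P_nonneg)

lemma al_le_be: "r \<ge> 0 \<Longrightarrow> al x r y \<le> be r y"
  unfolding be_sum by (rule member_le_sum) (auto intro: al_nonneg)

lemma be_le1: "r \<ge> 0 \<Longrightarrow> be r y \<le> 1"
  unfolding be_def using P_nonneg[of r "Some y" None] by simp

lemma be_ge: "r \<ge> 0 \<Longrightarrow> be r y \<ge> exp (- (Q.Cd * r))"
proof -
  assume r: "r \<ge> 0"
  have "al y r y \<le> be r y" by (rule al_le_be[OF r])
  moreover have "al y r y \<ge> exp (- (Q.Cd * r))" unfolding al_def by (rule P_diag[OF r])
  ultimately show ?thesis by linarith
qed

end


lemma fiber:
  fixes \<eta> :: "nat \<Rightarrow> 'a::finite" and \<psi> :: "'a \<Rightarrow> real"
  assumes "finite J"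
  shows "(\<Sum>z\<in>UNIV. real (card {j\<in>J. \<eta> j = z}) * \<psi> z) = (\<Sum>j\<in>J. \<psi> (\<eta> j))"
proof -
  have "(\<Sum>z\<in>UNIV. real (card {j\<in>J. \<eta> j = z}) * \<psi> z) = (\<Sum>z\<in>UNIV. \<Sum>j\<in>J. if \<eta> j = z then \<psi> z else 0)"
  proof (rule sum.cong[OF refl])
    fix z
    have "real (card {j\<in>J. \<eta> j = z}) = (\<Sum>j\<in>{j\<in>J. \<eta> j = z}. 1)" by simp
    also have "\<dots> = (\<Sum>j\<in>J. if \<eta> j = z then 1 else 0)" using assms by (rule sum.inter_filter)
    finally have "real (card {j\<in>J. \<eta> j = z}) * \<psi> z = (\<Sum>j\<in>J. (if \<eta> j = z then 1 else 0) * \<psi> z)"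
      by (simp add: sum_distrib_right)
    also have "\<dots> = (\<Sum>j\<in>J. if \<eta> j = z then \<psi> z else 0)" by (intro sum.cong refl) simp
    finally show "real (card {j\<in>J. \<eta> j = z}) * \<psi> z = (\<Sum>j\<in>J. if \<eta> j = z then \<psi> z else 0)" .
  qed
  also have "\<dots> = (\<Sum>j\<in>J. \<Sum>z\<in>UNIV. if \<eta> j = z then \<psi> z else 0)" by (rule sum.swap)
  also have "\<dots> = (\<Sum>j\<in>J. \<psi> (\<eta> j))" by simp
  finally show ?thesis .
qed

lemma jump_identity0:
  fixes a b c da db :: real
  assumes "b \<noteq> 0" "c \<noteq> 0" "db = c - b"
  shows "(a + da)/c - a/b = (da - (a/b)*db)/b - (da - (a/b)*db)*db/(b*c)"
  unfolding assms(3) using assms(1,2) by (simp add: field_simps)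

lemma jump_identity:
  fixes a b da db :: real
  assumes "b \<noteq> 0" "b + db \<noteq> 0"
  shows "(a + da)/(b + db) - a/b = (da - (a/b)*db)/b - (da - (a/b)*db)*db/(b*(b+db))"
  by (rule jump_identity0) (use assms in auto)

lemma alg1:
  fixes m A B gv qa qb ka kb k :: real
  assumes "B \<noteq> 0" "m \<noteq> 0" "A = gv * B"
  shows "(qa + ka + (k*A - (m+1)*ka)/m) - gv*(qb + kb + (k*B - (m+1)*kb)/m) = (qa - gv*qb) - (ka - gv*kb)/m"
  using assms by (simp add: field_simps)

lemma Ebound:
  fixes B db da gv c :: real
  assumes c: "c > 0" and B: "B \<ge> c" and B': "B + db \<ge> c" and "\<bar>da\<bar> \<le> 1" "\<bar>db\<bar> \<le> 1" "\<bar>gv\<bar> \<le> 1"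
  shows "\<bar>(da - gv*db)*db/(B*(B+db))\<bar> \<le> 2/(c*c)"
proof -
  have "\<bar>da - gv*db\<bar> \<le> 2"
  proof -
    have "\<bar>gv*db\<bar> \<le> 1" using assms by (simp add: abs_mult mult_le_one)
    then show ?thesis using assms by linarith
  qed
  then have n: "\<bar>(da - gv*db)*db\<bar> \<le> 2" using assms by (simp add: abs_mult mult_le_one) (metis abs_ge_zero mult_le_cancel_left1 mult.commute order_trans mult_right_le_one_le)
  have d: "B*(B+db) \<ge> c*c" using c B B' by (intro mult_mono) auto
  have pos: "B*(B+db) > 0" using c B B' by (intro mult_pos_pos) auto
  have "\<bar>(da - gv*db)*db/(B*(B+db))\<bar> = \<bar>(da - gv*db)*db\<bar>/(B*(B+db))" using c B B' by (simp add: abs_div)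
  also have "\<dots> \<le> 2/(B*(B+db))" using n c B B' by (intro divide_right_mono) auto
  also have "\<dots> \<le> 2/(c*c)" using d c pos by (intro divide_left_mono) auto
  finally show ?thesis .
qed

lemma abs_mult_le: "0 \<le> c \<Longrightarrow> c \<le> 1 \<Longrightarrow> \<bar>a * c\<bar> \<le> \<bar>a\<bar>" for a c :: real
  by (simp add: abs_mult mult_right_le_one_le)

locale fvctx = qctx q for q :: "'a::finite option \<Rightarrow> 'a option \<Rightarrow> real" +
  fixes N :: nat
  assumes N2: "N \<ge> 2"
begin

definition R :: "(nat \<Rightarrow> 'a) \<Rightarrow> nat \<Rightarrow> 'a \<Rightarrow> real" where
  "R \<eta> i z = q (Some (\<eta> i)) (Some z) + q (Some (\<eta> i)) None *
         (real (card {j\<in>{..<N}. j \<noteq> i \<and> \<eta> j = z}) / (real N - 1))"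

definition sm :: "('a \<Rightarrow> real) \<Rightarrow> (nat \<Rightarrow> 'a) \<Rightarrow> real" where
  "sm \<phi> \<eta> = (\<Sum>i<N. \<phi> (\<eta> i))"

lemma FV_R: "FV_gen q N f \<eta> = (\<Sum>i<N. \<Sum>z\<in>UNIV - {\<eta> i}. R \<eta> i z * (f (\<eta>(i := z)) - f \<eta>))"
  unfolding FV_gen_def R_def ..

lemma upd_configs: "\<eta> \<in> configs N \<Longrightarrow> i < N \<Longrightarrow> \<eta>(i := z) \<in> configs N"
  unfolding configs_def by (auto simp: PiE_iff extensional_def)

lemma Nm1: "real N - 1 > 0" using N2 by simp

lemma card_le: "real (card {j\<in>{..<N}. j \<noteq> i \<and> \<eta> j = z}) \<le> real N - 1" if "i < N"
proof -
  have "{j\<in>{..<N}. j \<noteq> i \<and> \<eta> j = z} \<subseteq> {..<N} - {i}" by auto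
  then have "card {j\<in>{..<N}. j \<noteq> i \<and> \<eta> j = z} \<le> card ({..<N} - {i})" by (intro card_mono) auto
  also have "\<dots> = N - 1" using that by simp
  finally show ?thesis using N2 by linarith
qed

lemma R_nonneg: "z \<noteq> \<eta> i \<Longrightarrow> R \<eta> i z \<ge> 0"
proof -
  assume z: "z \<noteq> \<eta> i"
  have "q (Some (\<eta> i)) (Some z) \<ge> 0" using rm z unfolding rate_matrix_def by auto
  moreover have "q (Some (\<eta> i)) None \<ge> 0" using rm unfolding rate_matrix_def by auto
  moreover have "real (card {j\<in>{..<N}. j \<noteq> i \<and> \<eta> j = z}) / (real N - 1) \<ge> 0" using Nm1 by simp
  ultimately show ?thesis unfolding R_def by (intro add_nonneg_nonneg mult_nonneg_nonneg)
qed

definition Cq :: real where "Cq = (\<Sum>u\<in>UNIV. \<Sum>v\<in>UNIV. \<bar>q u v\<bar>)"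

lemma q_le: "\<bar>q u v\<bar> \<le> Cq"
proof -
  have "\<bar>q u v\<bar> \<le> (\<Sum>v\<in>UNIV. \<bar>q u v\<bar>)" by (rule member_le_sum) auto
  also have "\<dots> \<le> Cq" unfolding Cq_def by (rule member_le_sum[of u UNIV "\<lambda>u. \<Sum>v\<in>UNIV. \<bar>q u v\<bar>"]) (auto intro: sum_nonneg)
  finally show ?thesis .
qed

lemma R_bound: "i < N \<Longrightarrow> \<bar>R \<eta> i z\<bar> \<le> 2 * Cq"
proof -
  assume i: "i < N"
  have c: "0 \<le> real (card {j\<in>{..<N}. j \<noteq> i \<and> \<eta> j = z}) / (real N - 1)"
    "real (card {j\<in>{..<N}. j \<noteq> i \<and> \<eta> j = z}) / (real N - 1) \<le> 1"
    using Nm1 card_le[OF i, of \<eta> z] by auto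
  have "\<bar>q (Some (\<eta> i)) None * (real (card {j\<in>{..<N}. j \<noteq> i \<and> \<eta> j = z}) / (real N - 1))\<bar>
      \<le> \<bar>q (Some (\<eta> i)) None\<bar>" by (rule abs_mult_le[OF c])
  then show ?thesis unfolding R_def using q_le[of "Some (\<eta> i)" "Some z"] q_le[of "Some (\<eta> i)" None] by linarith
qed

sublocale F: lingen "configs N" "FV_gen q N"
proof
  show "finite (configs N :: (nat \<Rightarrow> 'a) set)" unfolding configs_def by (rule finite_PiE) auto
  fix f g :: "(nat \<Rightarrow> 'a) \<Rightarrow> real"
  show "FV_gen q N (\<lambda>x. f x + g x) = (\<lambda>x. FV_gen q N f x + FV_gen q N g x)"
    unfolding FV_R by (rule ext) (simp add: sum.distrib[symmetric] algebra_simps)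
next
  fix c and f :: "(nat \<Rightarrow> 'a) \<Rightarrow> real"
  show "FV_gen q N (\<lambda>x. c * f x) = (\<lambda>x. c * FV_gen q N f x)"
    unfolding FV_R by (rule ext) (simp add: sum_distrib_left algebra_simps)
next
  fix f g :: "(nat \<Rightarrow> 'a) \<Rightarrow> real" and x :: "nat \<Rightarrow> 'a"
  assume fg: "\<And>y. y \<in> configs N \<Longrightarrow> f y = g y" and x: "x \<in> configs N"
  show "FV_gen q N f x = FV_gen q N g x"
    unfolding FV_R using fg[OF upd_configs[OF x]] fg[OF x] by (intro sum.cong refl) auto
qed

lemma F_offd: "x \<in> configs N \<Longrightarrow> y \<in> configs N \<Longrightarrow> y \<noteq> x \<Longrightarrow> FV_gen q N (dlt y) x \<ge> 0"
  unfolding FV_R by (intro sum_nonneg mult_nonneg_nonneg R_nonneg) (auto simp: dlt_def)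

lemma F1: "FV_gen q N (\<lambda>_. 1) x = 0"
  unfolding FV_R by simp

lemma per_i:
  assumes i: "i < N"
  shows "(\<Sum>z\<in>UNIV - {\<eta> i}. R \<eta> i z * (\<phi> z - \<phi> (\<eta> i)))
       = QL \<phi> (\<eta> i) + kap (\<eta> i) * \<phi> (\<eta> i) + kap (\<eta> i) * (sm \<phi> \<eta> - real N * \<phi> (\<eta> i)) / (real N - 1)"
proof -
  define w where "w = \<eta> i"
  have split: "(\<Sum>z\<in>UNIV - {w}. R \<eta> i z * (\<phi> z - \<phi> w))
     = (\<Sum>z\<in>UNIV - {w}. q (Some w) (Some z) * (\<phi> z - \<phi> w))
       + kap w / (real N - 1) * (\<Sum>z\<in>UNIV - {w}. real (card {j\<in>{..<N}. j \<noteq> i \<and> \<eta> j = z}) * (\<phi> z - \<phi> w))"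
  proof -
    have "(\<Sum>z\<in>UNIV - {w}. R \<eta> i z * (\<phi> z - \<phi> w))
       = (\<Sum>z\<in>UNIV - {w}. q (Some w) (Some z) * (\<phi> z - \<phi> w)
           + kap w / (real N - 1) * (real (card {j\<in>{..<N}. j \<noteq> i \<and> \<eta> j = z}) * (\<phi> z - \<phi> w)))"
      by (intro sum.cong refl) (simp add: R_def kap_def w_def algebra_simps diff_divide_distrib)
    then show ?thesis by (simp only: sum.distrib sum_distrib_left)
  qed
  have s1: "(\<Sum>z\<in>UNIV - {w}. q (Some w) (Some z) * (\<phi> z - \<phi> w)) = QL \<phi> w + kap w * \<phi> w"
  proof -
    have "(\<Sum>z\<in>UNIV - {w}. q (Some w) (Some z) * (\<phi> z - \<phi> w)) = (\<Sum>z\<in>UNIV. q (Some w) (Some z) * (\<phi> z - \<phi> w))"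
      by (simp add: sum_diff1)
    also have "\<dots> = QL \<phi> w - \<phi> w * (\<Sum>z\<in>UNIV. q (Some w) (Some z))"
      by (simp add: QL_def algebra_simps sum_subtractf sum_distrib_left)
    also have "\<dots> = QL \<phi> w + kap w * \<phi> w" by (simp add: rowsum)
    finally show ?thesis .
  qed
  have s2: "(\<Sum>z\<in>UNIV - {w}. real (card {j\<in>{..<N}. j \<noteq> i \<and> \<eta> j = z}) * (\<phi> z - \<phi> w)) = sm \<phi> \<eta> - real N * \<phi> w"
  proof -
    have "(\<Sum>z\<in>UNIV - {w}. real (card {j\<in>{..<N}. j \<noteq> i \<and> \<eta> j = z}) * (\<phi> z - \<phi> w))
        = (\<Sum>z\<in>UNIV. real (card {j\<in>{..<N}. j \<noteq> i \<and> \<eta> j = z}) * (\<phi> z - \<phi> w))"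
      by (simp add: sum_diff1)
    also have "\<dots> = (\<Sum>z\<in>UNIV. real (card {j\<in>{..<N} - {i}. \<eta> j = z}) * (\<phi> z - \<phi> w))"
    proof -
      have "\<And>z. {j\<in>{..<N}. j \<noteq> i \<and> \<eta> j = z} = {j\<in>{..<N} - {i}. \<eta> j = z}" by auto
      then show ?thesis by simp
    qed
    also have "\<dots> = (\<Sum>j\<in>{..<N} - {i}. \<phi> (\<eta> j) - \<phi> w)" by (rule fiber) simp
    also have "\<dots> = (\<Sum>j\<in>{..<N}. \<phi> (\<eta> j) - \<phi> w)" using i by (simp add: sum_diff1 w_def)
    also have "\<dots> = sm \<phi> \<eta> - real N * \<phi> w" by (simp add: sm_def sum_subtractf)
    finally show ?thesis .
  qed
  show ?thesis unfolding w_def[symmetric] split s1 s2 by simp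
qed

lemma FV_lin:
  "(\<Sum>i<N. \<Sum>z\<in>UNIV - {\<eta> i}. R \<eta> i z * (\<phi> z - \<phi> (\<eta> i)))
     = sm (QL \<phi>) \<eta> + sm (\<lambda>y. kap y * \<phi> y) \<eta> + (sm kap \<eta> * sm \<phi> \<eta> - real N * sm (\<lambda>y. kap y * \<phi> y) \<eta>) / (real N - 1)"
proof -
  have "(\<Sum>i<N. \<Sum>z\<in>UNIV - {\<eta> i}. R \<eta> i z * (\<phi> z - \<phi> (\<eta> i)))
      = (\<Sum>i<N. QL \<phi> (\<eta> i) + kap (\<eta> i) * \<phi> (\<eta> i) + kap (\<eta> i) * (sm \<phi> \<eta> - real N * \<phi> (\<eta> i)) / (real N - 1))"
    by (intro sum.cong refl per_i) simp
  also have "\<dots> = sm (QL \<phi>) \<eta> + sm (\<lambda>y. kap y * \<phi> y) \<eta> + (sm kap \<eta> * sm \<phi> \<eta> - real N * sm (\<lambda>y. kap y * \<phi> y) \<eta>) / (real N - 1)"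
    unfolding sm_def by (simp add: sum.distrib sum_divide_distrib[symmetric] sum_distrib_left sum_distrib_right sum_subtractf algebra_simps)
  finally show ?thesis .
qed

lemma sm_upd:
  assumes i: "i < N"
  shows "sm \<phi> (\<eta>(i := z)) = sm \<phi> \<eta> + (\<phi> z - \<phi> (\<eta> i))"
proof -
  have e0: "(\<Sum>j\<in>{..<N} - {i}. \<phi> ((\<eta>(i := z)) j)) = (\<Sum>j\<in>{..<N} - {i}. \<phi> (\<eta> j))"
    by (intro sum.cong refl) auto
  have e1: "sm \<phi> (\<eta>(i := z)) = \<phi> ((\<eta>(i := z)) i) + (\<Sum>j\<in>{..<N} - {i}. \<phi> ((\<eta>(i := z)) j))"
    unfolding sm_def using i by (intro sum.remove) auto
  have e2: "sm \<phi> \<eta> = \<phi> (\<eta> i) + (\<Sum>j\<in>{..<N} - {i}. \<phi> (\<eta> j))"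
    unfolding sm_def using i by (intro sum.remove) auto
  show ?thesis using e0 e1 e2 by simp
qed

lemma sm_lower: "(\<And>y. lo \<le> \<phi> y) \<Longrightarrow> real N * lo \<le> sm \<phi> \<eta>"
  unfolding sm_def using sum_bounded_below[of "{..<N}" lo "\<lambda>i. \<phi> (\<eta> i)"] by simp

lemma sm_upper: "(\<And>y. \<phi> y \<le> hi) \<Longrightarrow> sm \<phi> \<eta> \<le> real N * hi"
  unfolding sm_def using sum_bounded_above[of "{..<N}" "\<lambda>i. \<phi> (\<eta> i)" hi] by simp

lemma sm_abs: "(\<And>y. \<bar>\<phi> y\<bar> \<le> m) \<Longrightarrow> \<bar>sm \<phi> \<eta>\<bar> \<le> real N * m"
proof -
  assume h: "\<And>y. \<bar>\<phi> y\<bar> \<le> m"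
  have "\<bar>sm \<phi> \<eta>\<bar> \<le> (\<Sum>i<N. \<bar>\<phi> (\<eta> i)\<bar>)" unfolding sm_def by (rule sum_abs)
  also have "\<dots> \<le> real N * m" using sum_bounded_above[of "{..<N}" "\<lambda>i. \<bar>\<phi> (\<eta> i)\<bar>" m] h by simp
  finally show ?thesis .
qed

lemma sm_mono: "(\<And>y. \<phi> y \<le> \<psi> y) \<Longrightarrow> sm \<phi> \<eta> \<le> sm \<psi> \<eta>"
  unfolding sm_def by (rule sum_mono) auto

definition gg :: "'a \<Rightarrow> real \<Rightarrow> (nat \<Rightarrow> 'a) \<Rightarrow> real" where
  "gg x r \<eta> = sm (al x r) \<eta> / sm (be r) \<eta>"

definition gg' :: "'a \<Rightarrow> real \<Rightarrow> (nat \<Rightarrow> 'a) \<Rightarrow> real" where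
  "gg' x r \<eta> = (sm (QL (al x r)) \<eta> * sm (be r) \<eta> - sm (al x r) \<eta> * sm (QL (be r)) \<eta>) / (sm (be r) \<eta> * sm (be r) \<eta>)"

lemma key:
  assumes r: "r \<ge> 0" and dl: "dl > 0" and bed: "\<And>y. be r y \<ge> dl"
  shows "\<bar>FV_gen q N (gg x r) \<eta> - gg' x r \<eta>\<bar> \<le> (2*Cq/dl + 4*real CARD('a)*Cq/dl^2) / (real N - 1)"
proof -
  define \<alpha> where "\<alpha> = al x r"
  define \<beta> where "\<beta> = be r"
  define A where "A = sm \<alpha> \<eta>"
  define B where "B = sm \<beta> \<eta>"
  define gv where "gv = A / B"
  have Npos: "real N > 0" using N2 by simp
  have a0: "0 \<le> \<alpha> y" for y unfolding \<alpha>_def by (rule al_nonneg[OF r])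
  have ab: "\<alpha> y \<le> \<beta> y" for y unfolding \<alpha>_def \<beta>_def by (rule al_le_be[OF r])
  have b1: "\<beta> y \<le> 1" for y unfolding \<beta>_def by (rule be_le1[OF r])
  have bd: "dl \<le> \<beta> y" for y unfolding \<beta>_def by (rule bed)
  have Bge: "B \<ge> real N * dl" unfolding B_def by (rule sm_lower[OF bd])
  have NdL: "real N * dl > 0" using Npos dl by simp
  have Bpos: "B > 0" using Bge NdL by linarith
  have A0: "A \<ge> 0" unfolding A_def using sm_lower[of 0 \<alpha> \<eta>] a0 by simp
  have AB: "A \<le> B" unfolding A_def B_def by (rule sm_mono[OF ab])
  have gv1: "\<bar>gv\<bar> \<le> 1" unfolding gv_def using A0 AB Bpos by simp
  define E where "E i z = ((\<alpha> z - \<alpha> (\<eta> i)) - gv * (\<beta> z - \<beta> (\<eta> i))) * (\<beta> z - \<beta> (\<eta> i)) / (B * (B + (\<beta> z - \<beta> (\<eta> i))))" for i z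
  have jump: "gg x r (\<eta>(i := z)) - gg x r \<eta>
      = ((\<alpha> z - \<alpha> (\<eta> i)) - gv * (\<beta> z - \<beta> (\<eta> i))) / B - E i z" if i: "i < N" for i z
  proof -
    have B': "B + (\<beta> z - \<beta> (\<eta> i)) = sm \<beta> (\<eta>(i := z))" unfolding B_def by (simp add: sm_upd[OF i])
    have "B + (\<beta> z - \<beta> (\<eta> i)) \<ge> real N * dl" unfolding B' by (rule sm_lower[OF bd])
    then have B'nz: "B + (\<beta> z - \<beta> (\<eta> i)) \<noteq> 0" using NdL by linarith
    have "gg x r (\<eta>(i := z)) - gg x r \<eta> = (A + (\<alpha> z - \<alpha> (\<eta> i))) / (B + (\<beta> z - \<beta> (\<eta> i))) - A / B"
      unfolding gg_def \<alpha>_def[symmetric] \<beta>_def[symmetric] A_def B_def by (simp add: sm_upd[OF i])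
    also have "\<dots> = ((\<alpha> z - \<alpha> (\<eta> i)) - gv * (\<beta> z - \<beta> (\<eta> i))) / B - E i z"
      unfolding E_def gv_def by (rule jump_identity) (use Bpos B'nz in auto)
    finally show ?thesis .
  qed
  define G where "G \<phi> = (\<Sum>i<N. \<Sum>z\<in>UNIV - {\<eta> i}. R \<eta> i z * (\<phi> z - \<phi> (\<eta> i)))" for \<phi>
  define RE where "RE = (\<Sum>i<N. \<Sum>z\<in>UNIV - {\<eta> i}. R \<eta> i z * E i z)"
  have FV: "FV_gen q N (gg x r) \<eta> = (G \<alpha> - gv * G \<beta>) / B - RE"
  proof -
    have "FV_gen q N (gg x r) \<eta> = (\<Sum>i<N. \<Sum>z\<in>UNIV - {\<eta> i}. R \<eta> i z * (((\<alpha> z - \<alpha> (\<eta> i)) - gv * (\<beta> z - \<beta> (\<eta> i))) / B - E i z))"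
      unfolding FV_R by (intro sum.cong refl) (simp add: jump)
    also have "\<dots> = (\<Sum>i<N. \<Sum>z\<in>UNIV - {\<eta> i}. (R \<eta> i z * (\<alpha> z - \<alpha> (\<eta> i)) - gv * (R \<eta> i z * (\<beta> z - \<beta> (\<eta> i)))) / B - R \<eta> i z * E i z)"
      by (intro sum.cong refl) (simp add: algebra_simps diff_divide_distrib)
    also have "\<dots> = (G \<alpha> - gv * G \<beta>) / B - RE"
      unfolding G_def RE_def by (simp add: sum_subtractf sum_divide_distrib[symmetric] sum_distrib_left)
    finally show ?thesis .
  qed
  define Y where "Y = sm (\<lambda>y. kap y * \<alpha> y) \<eta> - gv * sm (\<lambda>y. kap y * \<beta> y) \<eta>"
  have T1: "G \<alpha> - gv * G \<beta> = (sm (QL \<alpha>) \<eta> - gv * sm (QL \<beta>) \<eta>) - Y / (real N - 1)"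
  proof -
    have m: "real N = (real N - 1) + 1" by simp
    have "G \<alpha> - gv * G \<beta> = (sm (QL \<alpha>) \<eta> + sm (\<lambda>y. kap y * \<alpha> y) \<eta> + (sm kap \<eta> * A - ((real N - 1) + 1) * sm (\<lambda>y. kap y * \<alpha> y) \<eta>) / (real N - 1))
       - gv * (sm (QL \<beta>) \<eta> + sm (\<lambda>y. kap y * \<beta> y) \<eta> + (sm kap \<eta> * B - ((real N - 1) + 1) * sm (\<lambda>y. kap y * \<beta> y) \<eta>) / (real N - 1))"
      unfolding G_def FV_lin A_def B_def by simp
    also have "\<dots> = (sm (QL \<alpha>) \<eta> - gv * sm (QL \<beta>) \<eta>) - Y / (real N - 1)"
      unfolding Y_def by (rule alg1) (use Bpos Nm1 in \<open>auto simp: gv_def\<close>)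
    finally show ?thesis .
  qed
  have g': "gg' x r \<eta> = (sm (QL \<alpha>) \<eta> - gv * sm (QL \<beta>) \<eta>) / B"
    unfolding gg'_def \<alpha>_def[symmetric] \<beta>_def[symmetric] A_def[symmetric] B_def[symmetric] gv_def
    using Bpos by (simp add: field_simps)
  have diff: "FV_gen q N (gg x r) \<eta> - gg' x r \<eta> = - (Y / (real N - 1) / B) - RE"
    unfolding FV T1 g' by (simp add: diff_divide_distrib)
  have kb: "\<bar>kap y * \<phi> y\<bar> \<le> Cq" if ph: "\<And>y. \<bar>\<phi> y\<bar> \<le> 1" for \<phi> y
  proof -
    have k: "\<bar>kap y\<bar> \<le> Cq" unfolding kap_def by (rule q_le)
    have "\<bar>kap y\<bar> * \<bar>\<phi> y\<bar> \<le> Cq * 1" by (rule mult_mono[OF k ph]) (use k in auto)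
    then show ?thesis by (simp add: abs_mult)
  qed
  have a1: "\<bar>\<alpha> y\<bar> \<le> 1" for y using a0[of y] ab[of y] b1[of y] by (simp add: abs_le_iff)
  have be1: "\<bar>\<beta> y\<bar> \<le> 1" for y using bd[of y] b1[of y] dl by (simp add: abs_le_iff)
  have Yb: "\<bar>Y\<bar> \<le> 2 * (real N * Cq)"
  proof -
    have s1: "\<bar>sm (\<lambda>y. kap y * \<alpha> y) \<eta>\<bar> \<le> real N * Cq"
      by (rule sm_abs) (rule kb[OF a1])
    have s2: "\<bar>sm (\<lambda>y. kap y * \<beta> y) \<eta>\<bar> \<le> real N * Cq"
      by (rule sm_abs) (rule kb[OF be1])
    have s3: "\<bar>gv * sm (\<lambda>y. kap y * \<beta> y) \<eta>\<bar> \<le> \<bar>sm (\<lambda>y. kap y * \<beta> y) \<eta>\<bar>"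
      unfolding abs_mult by (rule mult_left_le_one_le) (use gv1 in auto)
    show ?thesis unfolding Y_def using s1 s2 s3 by linarith
  qed
  have b_first: "\<bar>Y / (real N - 1) / B\<bar> \<le> 2 * Cq / dl / (real N - 1)"
  proof -
    have "\<bar>Y / (real N - 1) / B\<bar> = \<bar>Y\<bar> / ((real N - 1) * B)" using Bpos Nm1 by (simp add: abs_div)
    also have "\<dots> \<le> (2 * (real N * Cq)) / ((real N - 1) * (real N * dl))"
      by (rule frac_le) (use Yb Bge Nm1 NdL in \<open>auto intro: mult_left_mono\<close>)
    also have "\<dots> = 2 * Cq / dl / (real N - 1)" using Npos dl Nm1 by (simp add: field_simps)
    finally show ?thesis .
  qed
  have Eb: "\<bar>E i z\<bar> \<le> 2 / ((real N * dl) * (real N * dl))" if i: "i < N" for i z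
  proof -
    have B': "B + (\<beta> z - \<beta> (\<eta> i)) = sm \<beta> (\<eta>(i := z))" unfolding B_def by (simp add: sm_upd[OF i])
    have "B + (\<beta> z - \<beta> (\<eta> i)) \<ge> real N * dl" unfolding B' by (rule sm_lower[OF bd])
    moreover have "\<bar>\<alpha> z - \<alpha> (\<eta> i)\<bar> \<le> 1" using a0[of z] a0[of "\<eta> i"] ab[of z] ab[of "\<eta> i"] b1[of z] b1[of "\<eta> i"] by linarith
    moreover have "\<bar>\<beta> z - \<beta> (\<eta> i)\<bar> \<le> 1" using bd[of z] bd[of "\<eta> i"] b1[of z] b1[of "\<eta> i"] dl by linarith
    ultimately show ?thesis unfolding E_def by (intro Ebound NdL Bge gv1)
  qed
  have CqN: "Cq \<ge> 0" using q_le[of None None] by linarith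
  have b_second: "\<bar>RE\<bar> \<le> 4 * real CARD('a) * Cq / dl^2 / (real N - 1)"
  proof -
    define c where "c = 2 * Cq * (2 / ((real N * dl) * (real N * dl)))"
    have c0: "c \<ge> 0" unfolding c_def using CqN by simp
    have "\<bar>RE\<bar> \<le> (\<Sum>i<N. \<bar>\<Sum>z\<in>UNIV - {\<eta> i}. R \<eta> i z * E i z\<bar>)" unfolding RE_def by (rule sum_abs)
    also have "\<dots> \<le> (\<Sum>i<N. real CARD('a) * c)"
    proof (rule sum_mono)
      fix i assume "i \<in> {..<N}"
      then have i: "i < N" by simp
      have "\<bar>\<Sum>z\<in>UNIV - {\<eta> i}. R \<eta> i z * E i z\<bar> \<le> (\<Sum>z\<in>UNIV - {\<eta> i}. \<bar>R \<eta> i z * E i z\<bar>)" by (rule sum_abs)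
      also have "\<dots> \<le> (\<Sum>z\<in>UNIV - {\<eta> i}. c)"
      proof (rule sum_mono)
        fix z
        show "\<bar>R \<eta> i z * E i z\<bar> \<le> c" unfolding c_def abs_mult
          by (rule mult_mono[OF R_bound[OF i] Eb[OF i]]) (use CqN in auto)
      qed
      also have "\<dots> \<le> real CARD('a) * c"
      proof -
        have "card (UNIV - {\<eta> i}) \<le> CARD('a)" by (rule card_mono) auto
        then show ?thesis using c0 by (simp add: mult_right_mono)
      qed
      finally show "\<bar>\<Sum>z\<in>UNIV - {\<eta> i}. R \<eta> i z * E i z\<bar> \<le> real CARD('a) * c" .
    qed
    also have "\<dots> = 4 * real CARD('a) * Cq / dl^2 / real N"
      unfolding c_def using Npos dl by (simp add: field_simps power2_eq_square)
    also have "\<dots> \<le> 4 * real CARD('a) * Cq / dl^2 / (real N - 1)"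
      by (rule divide_left_mono) (use CqN Nm1 dl in auto)
    finally show ?thesis .
  qed
  have "\<bar>FV_gen q N (gg x r) \<eta> - gg' x r \<eta>\<bar> \<le> \<bar>Y / (real N - 1) / B\<bar> + \<bar>RE\<bar>"
    unfolding diff by linarith
  also have "\<dots> \<le> 2 * Cq / dl / (real N - 1) + 4 * real CARD('a) * Cq / dl^2 / (real N - 1)"
    using b_first b_second by linarith
  also have "\<dots> = (2*Cq/dl + 4*real CARD('a)*Cq/dl^2) / (real N - 1)" by (simp add: add_divide_distrib)
  finally show ?thesis .
qed

end



context fvctx begin

lemma sm_deriv_al: "((\<lambda>r. sm (al x r) \<eta>) has_real_derivative sm (QL (al x r)) \<eta>) (at r)"
  unfolding sm_def by (rule DERIV_sum) (rule al_deriv)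

lemma sm_deriv_be: "((\<lambda>r. sm (be r) \<eta>) has_real_derivative sm (QL (be r)) \<eta>) (at r)"
  unfolding sm_def by (rule DERIV_sum) (rule be_deriv)

lemma gg0: "gg x 0 = (\<lambda>\<eta>. emp N \<eta> x)"
proof
  fix \<eta> :: "nat \<Rightarrow> 'a"
  have a: "al x 0 y = (if y = x then 1 else 0)" for y
    unfolding al_def expQ_sg Q.sg_zero by (simp add: dlt_def)
  have b: "be 0 y = 1" for y
    unfolding be_def expQ_sg Q.sg_zero by (simp add: dlt_def)
  have "sm (al x 0) \<eta> = (\<Sum>i\<in>{..<N}. if \<eta> i = x then 1 else 0)" unfolding sm_def a ..
  also have "\<dots> = real (card {i\<in>{..<N}. \<eta> i = x})" by (simp add: sum.inter_filter[symmetric])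
  finally have "sm (al x 0) \<eta> = real (card {i\<in>{..<N}. \<eta> i = x})" .
  moreover have "sm (be 0) \<eta> = real N" unfolding sm_def b by simp
  ultimately show "gg x 0 \<eta> = emp N \<eta> x" unfolding gg_def emp_def by simp
qed

lemma ggT: "gg x t \<xi> = Tt q t (emp N \<xi>) x"
proof -
  have Npos: "real N > 0" using N2 by simp
  have f: "(\<Sum>y\<in>UNIV. emp N \<xi> y * \<psi> y) = sm \<psi> \<xi> / real N" for \<psi>
  proof -
    have "(\<Sum>y\<in>UNIV. emp N \<xi> y * \<psi> y) = (\<Sum>y\<in>UNIV. real (card {i\<in>{..<N}. \<xi> i = y}) * \<psi> y) / real N"
      unfolding emp_def by (simp add: sum_divide_distrib)
    also have "\<dots> = sm \<psi> \<xi> / real N" unfolding sm_def by (subst fiber) auto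
    finally show ?thesis .
  qed
  have num: "(\<Sum>y\<in>UNIV. emp N \<xi> y * expQ q t (Some y) (Some x)) = sm (al x t) \<xi> / real N"
    using f[of "al x t"] unfolding al_def .
  have "sm (be t) \<xi> = real N - sm (\<lambda>y. expQ q t (Some y) None) \<xi>"
    unfolding sm_def be_def by (simp add: sum_subtractf)
  then have den: "1 - (\<Sum>y\<in>UNIV. emp N \<xi> y * expQ q t (Some y) None) = sm (be t) \<xi> / real N"
    using f[of "\<lambda>y. expQ q t (Some y) None"] Npos by (simp add: field_simps)
  show ?thesis unfolding Tt_def num den gg_def using Npos by simp
qed

lemma coord_bound:
  assumes T: "T > 0" and t: "t \<in> {0..T}" and xi: "\<xi> \<in> configs N"
  shows "\<bar>FV_mean q N t \<xi> x - Tt q t (emp N \<xi>) x\<bar>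
     \<le> T * ((2*Cq/exp (- (Q.Cd * T)) + 4*real CARD('a)*Cq/(exp (- (Q.Cd * T)))^2) / (real N - 1))"
proof -
  define dl where "dl = exp (- (Q.Cd * T))"
  define K where "K = (2*Cq/dl + 4*real CARD('a)*Cq/dl^2) / (real N - 1)"
  have dl: "dl > 0" unfolding dl_def by simp
  have t0: "t \<ge> 0" and tT: "t \<le> T" using t by auto
  have bed: "be r y \<ge> dl" if r: "r \<in> {0..t}" for r y
  proof -
    have "exp (- (Q.Cd * T)) \<le> exp (- (Q.Cd * r))"
      using r tT Q.Cd_nonneg by (auto intro: mult_left_mono)
    moreover have "exp (- (Q.Cd * r)) \<le> be r y" using be_ge[of r y] r by auto
    ultimately show ?thesis unfolding dl_def by linarith
  qed
  have Npos: "real N > 0" using N2 by simp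
  have dG: "((\<lambda>r. gg x r \<eta>) has_real_derivative gg' x r \<eta>) (at r)" if r: "r \<in> {0..t}" for r \<eta>
  proof -
    have "sm (be r) \<eta> \<ge> real N * dl" by (rule sm_lower[OF bed[OF r]])
    then have "sm (be r) \<eta> \<noteq> 0" using Npos dl by (smt (verit) mult_pos_pos)
    then show ?thesis unfolding gg_def gg'_def
      by (rule DERIV_divide[OF sm_deriv_al sm_deriv_be])
  qed
  have bd: "\<bar>FV_gen q N (gg x r) \<eta> - gg' x r \<eta>\<bar> \<le> K" if r: "r \<in> {0..t}" for r \<eta>
    unfolding K_def by (rule key[OF _ dl bed[OF r]]) (use r in auto)
  have "\<bar>semigroup t (FV_gen q N) (gg x 0) \<xi> - gg x t \<xi>\<bar> \<le> t * K"
    by (rule F.duhamel[OF F_offd F1 xi t0 dG bd])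
  moreover have "semigroup t (FV_gen q N) (gg x 0) \<xi> = FV_mean q N t \<xi> x"
    unfolding gg0 FV_mean_def ..
  moreover have "t * K \<le> T * K"
  proof -
    have "K \<ge> 0" unfolding K_def using dl Nm1 q_le[of None None]
      by (intro divide_nonneg_pos add_nonneg_nonneg) auto
    then show ?thesis using tT by (rule mult_right_mono[rotated])
  qed
  ultimately show ?thesis unfolding ggT K_def dl_def by linarith
qed

end

theorem lemma4p1:
  fixes q :: "'a::finite option \<Rightarrow> 'a option \<Rightarrow> real" and T :: real
  assumes "rate_matrix q"
    and "\<forall>y. q None y = 0"
    and "irreducible_on_Lambda q"
    and "T > 0"
  shows "\<forall>\<epsilon>>0. \<exists>N0\<ge>2. \<forall>N\<ge>N0. \<forall>t\<in>{0..T}. \<forall>\<xi>\<in>configs N.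
           norm2 (\<lambda>x. FV_mean q N t \<xi> x - Tt q t (emp N \<xi>) x) < \<epsilon>"
proof -
  interpret qctx q using assms(1,2) by unfold_locales
  have T: "T > 0" by fact
  define dl where "dl = exp (- (Q.Cd * T))"
  define C where "C = (\<Sum>u\<in>UNIV. \<Sum>v\<in>UNIV. \<bar>q u v\<bar>)"
  define K0 where "K0 = 2*C/dl + 4*real CARD('a)*C/dl^2"
  define X where "X = real CARD('a) * (T * K0)"
  have C0: "C \<ge> 0" unfolding C_def by (intro sum_nonneg) auto
  have dl: "dl > 0" unfolding dl_def by simp
  have K0: "K0 \<ge> 0" unfolding K0_def using C0 dl by (intro add_nonneg_nonneg) auto
  have X0: "X \<ge> 0" unfolding X_def using K0 T by simp
  show ?thesis
  proof (intro allI impI)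
    fix \<epsilon> :: real assume e: "\<epsilon> > 0"
    define N0 where "N0 = nat \<lceil>X/\<epsilon>\<rceil> + 2"
    show "\<exists>N0\<ge>2. \<forall>N\<ge>N0. \<forall>t\<in>{0..T}. \<forall>\<xi>\<in>configs N.
           norm2 (\<lambda>x. FV_mean q N t \<xi> x - Tt q t (emp N \<xi>) x) < \<epsilon>"
    proof (intro exI[of _ N0] conjI allI impI ballI)
      show "2 \<le> N0" unfolding N0_def by simp
      fix N t and \<xi> :: "nat \<Rightarrow> 'a" assume N: "N0 \<le> N" and t: "t \<in> {0..T}" and xi: "\<xi> \<in> configs N"
      have N2: "N \<ge> 2" using N unfolding N0_def by simp
      interpret F: fvctx q N by unfold_locales (rule N2)
      have Nm: "real N - 1 > 0" using N2 by simp
      have cb: "\<bar>FV_mean q N t \<xi> x - Tt q t (emp N \<xi>) x\<bar> \<le> T * (K0 / (real N - 1))" for x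
        using F.coord_bound[OF T t xi, of x] unfolding F.Cq_def K0_def C_def dl_def .
      have "norm2 (\<lambda>x. FV_mean q N t \<xi> x - Tt q t (emp N \<xi>) x)
          \<le> (\<Sum>x\<in>UNIV. \<bar>FV_mean q N t \<xi> x - Tt q t (emp N \<xi>) x\<bar>)"
        unfolding norm2_def using L2_set_le_sum_abs[unfolded L2_set_def] .
      also have "\<dots> \<le> (\<Sum>x\<in>(UNIV::'a set). T * (K0 / (real N - 1)))" by (rule sum_mono) (rule cb)
      also have "\<dots> = X / (real N - 1)" unfolding X_def by simp
      also have "\<dots> < \<epsilon>"
      proof -
        have "real N \<ge> real (nat \<lceil>X/\<epsilon>\<rceil>) + 2" using N unfolding N0_def by simp
        moreover have "real (nat \<lceil>X/\<epsilon>\<rceil>) \<ge> X/\<epsilon>" by linarith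
        ultimately have "real N - 1 > X/\<epsilon>" by linarith
        then have "X < \<epsilon> * (real N - 1)" using e by (simp add: divide_less_eq mult.commute)
        then show ?thesis using Nm by (simp add: divide_less_eq)
      qed
      finally show "norm2 (\<lambda>x. FV_mean q N t \<xi> x - Tt q t (emp N \<xi>) x) < \<epsilon>" .
    qed
  qed
qed


end
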